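(* Let $\mathcal{X}\subseteq\mathbb{R}^n$ be a compact set that is comonotone under a permutation mapping $\Psi:\Pi_n\to\Pi_n$. If $\Psi$ is surjective, then $\mathcal{X}$ is standard comonotone.
   Context: $\Pi_n$ is the set of permutations of $[n]$. For $\pi\in\Pi_n$, $\mathcal{Z}(\pi)=\{x\in\mathbb{R}^n: x_{\pi(1)}\ge\cdots\ge x_{\pi(n)}\}$. $\mathcal{X}$ is comonotone under $\Psi$ if for every $\pi\in\Pi_n$ and every $v\in\mathcal{Z}(\pi)$, whenever $\max_{x\in\mathcal{X}}v^\top x$ attains its optimum, it has an optimal solution $x^*\in\mathcal{Z}(\Psi(\pi))$. $\mathcal{X}$ is standard comonotone if it is comonotone under the identity mapping $\Psi(\pi)=\pi$. *)

theory Defs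
  imports "HOL-Analysis.Analysis"
begin

text \<open>Coordinates of R^n are indexed by a finite linearly ordered type 'n
  (isomorphic to {1..n} with its usual order); permutations of [n] are the
  functions that permute UNIV :: 'n set.\<close>

definition zone :: "('n::{finite,linorder} \<Rightarrow> 'n) \<Rightarrow> (real^'n::{finite,linorder}) set" where
  "zone \<pi> = {x. \<forall>i j. i \<le> j \<longrightarrow> x $ (\<pi> j) \<le> x $ (\<pi> i)}"

definition comonotone_under ::
  "(('n::{finite,linorder} \<Rightarrow> 'n) \<Rightarrow> ('n \<Rightarrow> 'n)) \<Rightarrow> (real^'n::{finite,linorder}) set \<Rightarrow> bool" where
  "comonotone_under \<Psi> X \<longleftrightarrow>
     (\<forall>\<pi>. \<pi> permutes UNIV \<longrightarrow> (\<forall>v \<in> zone \<pi>.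
        (\<exists>x\<in>X. \<forall>y\<in>X. v \<bullet> y \<le> v \<bullet> x) \<longrightarrow>
        (\<exists>x\<in>X. (\<forall>y\<in>X. v \<bullet> y \<le> v \<bullet> x) \<and> x \<in> zone (\<Psi> \<pi>))))"

definition standard_comonotone :: "(real^'n::{finite,linorder}) set \<Rightarrow> bool" where
  "standard_comonotone X \<longleftrightarrow> comonotone_under (\<lambda>\<pi>. \<pi>) X"

end

theory Submission
  imports Defs
begin

lemma permutes_remove_fixed:
  assumes "f permutes A" "f m = m"
  shows "f permutes (A - {m})"
  using assms unfolding permutes_def by (metis Diff_iff singletonD)

lemma rearr:
  fixes s a :: "'a::linorder \<Rightarrow> real"
  assumes "finite A" "\<tau> permutes A"
    and "\<forall>i\<in>A. \<forall>j\<in>A. i \<le> j \<longrightarrow> s j \<le> s i"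
    and "\<forall>i\<in>A. \<forall>j\<in>A. i \<le> j \<longrightarrow> a j \<le> a i"
  shows "(\<Sum>i\<in>A. s i * a (\<tau> i)) \<le> (\<Sum>i\<in>A. s i * a i)"
  using assms
proof (induction "card A" arbitrary: A \<tau>)
  case 0
  then show ?case by simp
next
  case (Suc n)
  then have ne: "A \<noteq> {}" by auto
  define m where "m = Max A"
  have mA: "m \<in> A" using Suc.prems ne m_def by simp
  have mmax: "\<And>i. i \<in> A \<Longrightarrow> i \<le> m" using Suc.prems m_def by simp
  define j where "j = inv \<tau> m"
  have jA: "j \<in> A" using Suc.prems(2) mA j_def by (simp add: permutes_inv permutes_in_image)
  have tj: "\<tau> j = m" using Suc.prems(2) j_def by (simp add: permutes_inverses(1))
  define \<tau>' where "\<tau>' = \<tau> \<circ> Transposition.transpose j m"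
  have p': "\<tau>' permutes A" unfolding \<tau>'_def
    using Suc.prems(2) jA mA by (simp add: permutes_compose permutes_swap_id)
  have tm': "\<tau>' m = m" unfolding \<tau>'_def using tj by simp
  have tmA: "\<tau> m \<in> A" using Suc.prems(2) mA by (simp add: permutes_in_image)
  have step: "(\<Sum>i\<in>A. s i * a (\<tau> i)) \<le> (\<Sum>i\<in>A. s i * a (\<tau>' i))"
  proof (cases "j = m")
    case True
    then show ?thesis unfolding \<tau>'_def by simp
  next
    case False
    have eq: "\<And>f. (\<Sum>i\<in>A. f i) = f j + f m + (\<Sum>i\<in>A - {j} - {m}. f i)"
      using Suc.prems(1) jA mA False
      by (metis (no_types, lifting) Diff_iff add.assoc singletonD sum.remove finite_Diff)
    have o: "\<And>i. i \<in> A - {j} - {m} \<Longrightarrow> \<tau>' i = \<tau> i" unfolding \<tau>'_def by (auto simp: transpose_def)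
    have "(s j - s m) * (a (\<tau> m) - a m) \<ge> 0"
      using Suc.prems(3,4) mmax jA mA tmA by (intro mult_nonneg_nonneg) auto
    then show ?thesis
      apply (subst (1 2) eq)
      using o tj False unfolding \<tau>'_def by (simp add: algebra_simps)
  qed
  have cA: "card (A - {m}) = n" using Suc.hyps(2) mA by simp
  have IH: "(\<Sum>i\<in>A - {m}. s i * a (\<tau>' i)) \<le> (\<Sum>i\<in>A - {m}. s i * a i)"
    using Suc.hyps(1)[OF cA[symmetric] _ permutes_remove_fixed[OF p' tm']] Suc.prems by auto
  have "(\<Sum>i\<in>A. s i * a (\<tau>' i)) \<le> (\<Sum>i\<in>A. s i * a i)"
    using IH Suc.prems(1) mA tm' by (simp add: sum.remove)
  then show ?case using step by linarith
qed


lemma vec_rearr: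
  fixes s :: "'n::{finite,linorder} \<Rightarrow> real"
  assumes s: "\<forall>i j. i \<le> j \<longrightarrow> s j \<le> s i"
    and p: "\<pi> permutes (UNIV::'n set)" and q: "\<sigma> permutes (UNIV::'n set)"
    and x: "x \<in> zone \<sigma>"
  shows "(\<chi> k. s (inv \<pi> k)) \<bullet> x \<le> (\<chi> k. s (inv \<sigma> k)) \<bullet> x"
proof -
  define a where "a i = x $ (\<sigma> i)" for i
  have a: "\<forall>i\<in>UNIV. \<forall>j\<in>UNIV. i \<le> j \<longrightarrow> a j \<le> a i" using x unfolding zone_def a_def by auto
  have re: "\<And>\<rho>. \<rho> permutes (UNIV::'n set) \<Longrightarrow> (\<chi> k. s (inv \<rho> k)) \<bullet> x = (\<Sum>i\<in>UNIV. s i * x $ (\<rho> i))"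
  proof -
    fix \<rho> :: "'n \<Rightarrow> 'n" assume r: "\<rho> permutes UNIV"
    have "(\<chi> k. s (inv \<rho> k)) \<bullet> x = (\<Sum>k\<in>UNIV. s (inv \<rho> k) * x $ k)" by (simp add: inner_vec_def)
    also have "\<dots> = (\<Sum>i\<in>UNIV. s (inv \<rho> (\<rho> i)) * x $ (\<rho> i))"
      using sum.reindex_bij_betw[OF permutes_imp_bij[OF r], of "\<lambda>k. s (inv \<rho> k) * x $ k"] by simp
    also have "\<dots> = (\<Sum>i\<in>UNIV. s i * x $ (\<rho> i))" using r by (simp add: permutes_inverses(2))
    finally show "(\<chi> k. s (inv \<rho> k)) \<bullet> x = (\<Sum>i\<in>UNIV. s i * x $ (\<rho> i))" .
  qed
  have t: "(inv \<sigma> \<circ> \<pi>) permutes (UNIV::'n set)" using p q by (simp add: permutes_compose permutes_inv)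
  have "(\<Sum>i\<in>UNIV. s i * x $ (\<pi> i)) = (\<Sum>i\<in>UNIV. s i * a ((inv \<sigma> \<circ> \<pi>) i))"
    unfolding a_def using q by (simp add: permutes_inverses(1))
  also have "\<dots> \<le> (\<Sum>i\<in>UNIV. s i * a i)" by (rule rearr[OF _ t _ a]) (use s in auto)
  finally show ?thesis using re[OF p] re[OF q] unfolding a_def by simp
qed

theorem theorem1:
  fixes X :: "(real^'n::{finite,linorder}) set"
    and \<Psi> :: "('n \<Rightarrow> 'n) \<Rightarrow> ('n \<Rightarrow> 'n)"
  assumes "compact X"
    and "\<forall>\<pi>. \<pi> permutes (UNIV :: 'n set) \<longrightarrow> \<Psi> \<pi> permutes (UNIV :: 'n set)"
    and "comonotone_under \<Psi> X"
    and "\<forall>\<sigma>. \<sigma> permutes (UNIV :: 'n set) \<longrightarrow>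
           (\<exists>\<pi>. \<pi> permutes (UNIV :: 'n set) \<and> \<Psi> \<pi> = \<sigma>)"
  shows "standard_comonotone X"
  unfolding standard_comonotone_def comonotone_under_def
proof (intro allI impI ballI)
  fix \<pi>0 v
  assume p0: "\<pi>0 permutes UNIV" and v: "v \<in> zone \<pi>0" and att: "\<exists>x\<in>X. \<forall>y\<in>X. v \<bullet> y \<le> v \<bullet> x"
  have ne: "X \<noteq> {}" using att by auto
  define s where "s i = v $ (\<pi>0 i)" for i
  have s: "\<forall>i j. i \<le> j \<longrightarrow> s j \<le> s i" using v unfolding zone_def s_def by auto
  define V where "V \<pi> = (\<chi> k. s (inv \<pi> k))" for \<pi> :: "'n::{finite,linorder} \<Rightarrow> 'n"
  have Vz: "V \<pi> \<in> zone \<pi>" if "\<pi> permutes UNIV" for \<pi> :: "'n::{finite,linorder} \<Rightarrow> 'n"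
    unfolding zone_def V_def using s that by (simp add: permutes_inverses(2))
  have Vv: "V \<pi>0 = v" unfolding V_def s_def using p0 by (simp add: permutes_inverses(1) vec_eq_iff)
  define g where "g \<pi> = (SUP y\<in>X. V \<pi> \<bullet> y)" for \<pi> :: "'n::{finite,linorder} \<Rightarrow> 'n"
  have bdd: "bdd_above ((\<lambda>y. V \<pi> \<bullet> y) ` X)" for \<pi> :: "'n::{finite,linorder} \<Rightarrow> 'n"
    by (intro bounded_imp_bdd_above compact_imp_bounded compact_continuous_image assms(1))
       (intro continuous_intros)
  have gup: "V \<pi> \<bullet> y \<le> g \<pi>" if "y \<in> X" for \<pi> :: "'n \<Rightarrow> 'n" and y
    unfolding g_def using bdd that by (rule cSUP_upper2) simp
  have geq: "g \<pi> = V \<pi> \<bullet> x" if "x \<in> X" "\<forall>y\<in>X. V \<pi> \<bullet> y \<le> V \<pi> \<bullet> x" for \<pi> :: "'n \<Rightarrow> 'n" and x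
    unfolding g_def using that by (intro antisym cSUP_least cSUP_upper2[OF bdd]) (auto simp: ne)
  have attV: "\<exists>x\<in>X. \<forall>y\<in>X. V \<pi> \<bullet> y \<le> V \<pi> \<bullet> x" for \<pi> :: "'n::{finite,linorder} \<Rightarrow> 'n"
    by (rule continuous_attains_sup[OF assms(1) ne]) (intro continuous_intros)
  have como: "\<exists>x\<in>X. (\<forall>y\<in>X. V \<pi> \<bullet> y \<le> V \<pi> \<bullet> x) \<and> x \<in> zone (\<Psi> \<pi>)" if "\<pi> permutes UNIV" for \<pi> :: "'n::{finite,linorder} \<Rightarrow> 'n"
    using assms(3) that Vz[OF that] attV unfolding comonotone_under_def by blast
  have mono: "g \<pi> \<le> g (\<Psi> \<pi>)" if pp: "\<pi> permutes UNIV" for \<pi> :: "'n::{finite,linorder} \<Rightarrow> 'n"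
  proof -
    obtain x where x: "x \<in> X" "\<forall>y\<in>X. V \<pi> \<bullet> y \<le> V \<pi> \<bullet> x" "x \<in> zone (\<Psi> \<pi>)" using como[OF pp] by blast
    have "g \<pi> = V \<pi> \<bullet> x" using geq x by blast
    also have "\<dots> \<le> V (\<Psi> \<pi>) \<bullet> x" unfolding V_def
      by (rule vec_rearr[OF s that _ x(3)]) (use assms(2) that in blast)
    also have "\<dots> \<le> g (\<Psi> \<pi>)" using gup x by blast
    finally show ?thesis .
  qed
  define P where "P = {\<pi> :: 'n::{finite,linorder} \<Rightarrow> 'n. \<pi> permutes UNIV}"
  have finP: "finite P" unfolding P_def by (simp add: finite_permutations)
  have img: "\<Psi> ` P = P" unfolding P_def using assms(2,4) by blast
  have inj: "inj_on \<Psi> P" by (rule eq_card_imp_inj_on[OF finP]) (simp add: img)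
  have sumeq: "(\<Sum>\<pi>\<in>P. g (\<Psi> \<pi>)) = (\<Sum>\<pi>\<in>P. g \<pi>)"
    using sum.reindex[OF inj, of g] img by simp
  have geqPsi: "g (\<Psi> \<pi>) = g \<pi>" if "\<pi> permutes UNIV" for \<pi> :: "'n::{finite,linorder} \<Rightarrow> 'n"
  proof (rule ccontr)
    assume "g (\<Psi> \<pi>) \<noteq> g \<pi>"
    then have "g \<pi> < g (\<Psi> \<pi>)" using mono[OF that] by simp
    then have "(\<Sum>\<pi>\<in>P. g \<pi>) < (\<Sum>\<pi>\<in>P. g (\<Psi> \<pi>))"
      using that mono finP by (intro sum_strict_mono_ex1) (auto simp: P_def)
    then show False using sumeq by simp
  qed
  obtain \<rho> where r: "\<rho> permutes UNIV" "\<Psi> \<rho> = \<pi>0" using assms(4) p0 by blast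
  obtain x where x: "x \<in> X" "\<forall>y\<in>X. V \<rho> \<bullet> y \<le> V \<rho> \<bullet> x" "x \<in> zone \<pi>0" using como[OF r(1)] r(2) by blast
  have "\<forall>y\<in>X. v \<bullet> y \<le> v \<bullet> x"
  proof
    fix y assume y: "y \<in> X"
    have "v \<bullet> y \<le> g \<pi>0" using gup[OF y, of \<pi>0] Vv by simp
    also have "\<dots> = g \<rho>" using geqPsi[OF r(1)] r(2) by simp
    also have "\<dots> = V \<rho> \<bullet> x" using geq x by blast
    also have "\<dots> \<le> V \<pi>0 \<bullet> x" unfolding V_def by (rule vec_rearr[OF s r(1) p0 x(3)])
    finally show "v \<bullet> y \<le> v \<bullet> x" using Vv by simp
  qed
  then show "\<exists>x\<in>X. (\<forall>y\<in>X. v \<bullet> y \<le> v \<bullet> x) \<and> x \<in> zone \<pi>0" using x by blast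
qed

end
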